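(* $\mathcal{G}\subseteq\mathcal{F}$; that is, every function in $\mathcal{G}$ is strictly definable in the simply typed $\lambda$-calculus with $\beta\eta$-conversion.
   Context: We work in the simply typed $\lambda$-calculus (type assignment to untyped $\lambda$-terms) with a single base type $o$. For a type $\tau$, $\omega_\tau=(\tau\to\tau)\to\tau\to\tau$. The Church numeral of $n$ is $\rho(n)=\lambda f x.f^{n}x$. A function $f:\mathbb{N}^k\to\mathbb{N}$ is strictly definable if there exist a type $\tau$ and a term $E$ with $\vdash E:\omega_\tau\to\cdots\to\omega_\tau\to\omega_\tau$ ($k$ arguments) such that $E\,\rho(n_1)\cdots\rho(n_k)=_{\beta\eta}\rho(f(n_1,\dots,n_k))$ for all $n_1,\dots,n_k\in\mathbb{N}$. $\mathcal{F}$ denotes the class of all strictly definable functions. Extended polynomials: the smallest class of functions over $\mathbb{N}$ containing the constants $0$ and $1$, projections, addition, multiplication and $\mathrm{ifzero}(n,m,p)=(\text{if } n=0 \text{ then } m \text{ else } p)$, closed under composition. $\mathcal{G}$ is the smallest class of functions over $\mathbb{N}$ that is closed under composition and contains: all extended polynomials; for every $l\geq 2$ the function $f_1^{l}(m,n_1,\dots,n_l)=n_i$ where $i=(m\bmod l)+1$; and for every $l\geq 1$ the function $f_2^{l}(m,n_1,n_2)=(\text{if } m\leq l \text{ then } n_1 \text{ else } n_2)$. *)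

theory Defs
  imports Main
begin

datatype ty = O | Arr ty ty

definition omega :: "ty \<Rightarrow> ty" where
  "omega \<tau> = Arr (Arr \<tau> \<tau>) (Arr \<tau> \<tau>)"

definition num_fun_ty :: "nat \<Rightarrow> ty \<Rightarrow> ty" where
  "num_fun_ty k \<tau> = ((Arr (omega \<tau>)) ^^ k) (omega \<tau>)"

datatype tm = Var nat | App tm tm | Lam tm

fun lift :: "tm \<Rightarrow> nat \<Rightarrow> tm" where
  "lift (Var i) k = (if i < k then Var i else Var (Suc i))"
| "lift (App s t) k = App (lift s k) (lift t k)"
| "lift (Lam s) k = Lam (lift s (Suc k))"

fun subst :: "tm \<Rightarrow> tm \<Rightarrow> nat \<Rightarrow> tm" where
  "subst (Var i) s k = (if k < i then Var (i - 1) else if i = k then s else Var i)"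
| "subst (App t u) s k = App (subst t s k) (subst u s k)"
| "subst (Lam t) s k = Lam (subst t (lift s 0) (Suc k))"

inductive bestep :: "tm \<Rightarrow> tm \<Rightarrow> bool" where
  beta: "bestep (App (Lam s) t) (subst s t 0)"
| eta: "bestep (Lam (App (lift s 0) (Var 0))) s"
| appL: "bestep s s' \<Longrightarrow> bestep (App s t) (App s' t)"
| appR: "bestep t t' \<Longrightarrow> bestep (App s t) (App s t')"
| abs: "bestep s s' \<Longrightarrow> bestep (Lam s) (Lam s')"

definition beta_eta_eq :: "tm \<Rightarrow> tm \<Rightarrow> bool" where
  "beta_eta_eq = (sup bestep (conversep bestep))\<^sup>*\<^sup>*"

inductive typing :: "ty list \<Rightarrow> tm \<Rightarrow> ty \<Rightarrow> bool" where
  var: "i < length \<Gamma> \<Longrightarrow> \<Gamma> ! i = \<tau> \<Longrightarrow> typing \<Gamma> (Var i) \<tau>"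
| app: "typing \<Gamma> s (Arr \<sigma> \<tau>) \<Longrightarrow> typing \<Gamma> t \<sigma> \<Longrightarrow> typing \<Gamma> (App s t) \<tau>"
| lam: "typing (\<sigma> # \<Gamma>) t \<tau> \<Longrightarrow> typing \<Gamma> (Lam t) (Arr \<sigma> \<tau>)"

definition church :: "nat \<Rightarrow> tm" where
  "church n = Lam (Lam (((App (Var 1)) ^^ n) (Var 0)))"

definition apps :: "tm \<Rightarrow> tm list \<Rightarrow> tm" where
  "apps E ts = foldl App E ts"

text \<open>A k-ary function is represented as f :: nat list => nat, only its values on
  lists of length k matter.\<close>
definition strictly_definable :: "nat \<Rightarrow> (nat list \<Rightarrow> nat) \<Rightarrow> bool" where
  "strictly_definable k f \<longleftrightarrow>
     (\<exists>\<tau> E. typing [] E (num_fun_ty k \<tau>) \<and>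
        (\<forall>ns. length ns = k \<longrightarrow> beta_eta_eq (apps E (map church ns)) (church (f ns))))"

inductive_set ext_poly :: "(nat \<times> (nat list \<Rightarrow> nat)) set" where
  zero: "(k, \<lambda>_. 0) \<in> ext_poly"
| one: "(k, \<lambda>_. 1) \<in> ext_poly"
| proj: "i < k \<Longrightarrow> (k, \<lambda>ns. ns ! i) \<in> ext_poly"
| add: "(2, \<lambda>ns. ns ! 0 + ns ! 1) \<in> ext_poly"
| mult: "(2, \<lambda>ns. ns ! 0 * ns ! 1) \<in> ext_poly"
| ifzero: "(3, \<lambda>ns. if ns ! 0 = 0 then ns ! 1 else ns ! 2) \<in> ext_poly"
| comp: "(length hs, g) \<in> ext_poly \<Longrightarrow> (\<forall>h \<in> set hs. (k, h) \<in> ext_poly) \<Longrightarrow>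
         (k, \<lambda>ns. g (map (\<lambda>h. h ns) hs)) \<in> ext_poly"
| ext: "(k, f) \<in> ext_poly \<Longrightarrow> (\<forall>ns. length ns = k \<longrightarrow> g ns = f ns) \<Longrightarrow> (k, g) \<in> ext_poly"

inductive_set classG :: "(nat \<times> (nat list \<Rightarrow> nat)) set" where
  poly: "(k, f) \<in> ext_poly \<Longrightarrow> (k, f) \<in> classG"
| f1: "2 \<le> l \<Longrightarrow> (Suc l, \<lambda>ns. ns ! (ns ! 0 mod l + 1)) \<in> classG"
| f2: "1 \<le> l \<Longrightarrow> (3, \<lambda>ns. if ns ! 0 \<le> l then ns ! 1 else ns ! 2) \<in> classG"
| comp: "(length hs, g) \<in> classG \<Longrightarrow> (\<forall>h \<in> set hs. (k, h) \<in> classG) \<Longrightarrow>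
         (k, \<lambda>ns. g (map (\<lambda>h. h ns) hs)) \<in> classG"
| ext: "(k, f) \<in> classG \<Longrightarrow> (\<forall>ns. length ns = k \<longrightarrow> g ns = f ns) \<Longrightarrow> (k, g) \<in> classG"

end

theory Submission
  imports Defs
begin

definition upr :: "(nat \<Rightarrow> nat) \<Rightarrow> nat \<Rightarrow> nat" where
  "upr r i = (case i of 0 \<Rightarrow> 0 | Suc j \<Rightarrow> Suc (r j))"

fun ren :: "(nat \<Rightarrow> nat) \<Rightarrow> tm \<Rightarrow> tm" where
  "ren r (Var i) = Var (r i)"
| "ren r (App s t) = App (ren r s) (ren r t)"
| "ren r (Lam t) = Lam (ren (upr r) t)"

definition ups :: "(nat \<Rightarrow> tm) \<Rightarrow> nat \<Rightarrow> tm" where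
  "ups \<sigma> i = (case i of 0 \<Rightarrow> Var 0 | Suc j \<Rightarrow> ren Suc (\<sigma> j))"

fun psub :: "(nat \<Rightarrow> tm) \<Rightarrow> tm \<Rightarrow> tm" where
  "psub \<sigma> (Var i) = \<sigma> i"
| "psub \<sigma> (App s t) = App (psub \<sigma> s) (psub \<sigma> t)"
| "psub \<sigma> (Lam t) = Lam (psub (ups \<sigma>) t)"

lemma upr_comp: "upr r \<circ> upr r' = upr (r \<circ> r')"
  by (simp add: fun_eq_iff upr_def split: nat.split)

lemma ren_ren: "ren r (ren r' t) = ren (r \<circ> r') t"
  by (induction t arbitrary: r r') (simp_all add: upr_comp)

lemma ups_upr: "ups \<sigma> \<circ> upr r = ups (\<sigma> \<circ> r)"
  by (simp add: fun_eq_iff upr_def ups_def split: nat.split)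

lemma psub_ren: "psub \<sigma> (ren r t) = psub (\<sigma> \<circ> r) t"
  by (induction t arbitrary: \<sigma> r) (simp_all add: ups_upr)

lemma upr_Suc: "upr r \<circ> Suc = Suc \<circ> r"
  by (simp add: fun_eq_iff upr_def)

lemma ren_ups: "ren (upr r) \<circ> ups \<sigma> = ups (ren r \<circ> \<sigma>)"
  by (simp add: fun_eq_iff upr_def ups_def ren_ren upr_Suc split: nat.split)

lemma ren_psub: "ren r (psub \<sigma> t) = psub (ren r \<circ> \<sigma>) t"
  by (induction t arbitrary: \<sigma> r) (simp_all add: ren_ups)

lemma ups_Suc: "ups \<sigma> \<circ> Suc = ren Suc \<circ> \<sigma>"
  by (simp add: fun_eq_iff ups_def)

lemma psub_ups: "psub (ups \<sigma>) \<circ> ups \<tau> = ups (psub \<sigma> \<circ> \<tau>)"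
  by (simp add: fun_eq_iff ups_def psub_ren ren_psub ups_Suc split: nat.split)

lemma psub_psub: "psub \<sigma> (psub \<tau> t) = psub (psub \<sigma> \<circ> \<tau>) t"
  by (induction t arbitrary: \<sigma> \<tau>) (simp_all add: psub_ups)

lemma ups_Var: "ups Var = Var"
  by (simp add: fun_eq_iff ups_def split: nat.split)

lemma psub_Var: "psub Var t = t"
  by (induction t) (simp_all add: ups_Var)

lemma lift_ren: "lift t k = ren (\<lambda>i. if i < k then i else Suc i) t"
proof (induction t arbitrary: k)
  case (Lam t)
  have "upr (\<lambda>i. if i < k then i else Suc i) = (\<lambda>i. if i < Suc k then i else Suc i)"
    by (simp add: fun_eq_iff upr_def split: nat.split)
  then show ?case using Lam by simp
qed simp_all

lemma lift0: "lift t 0 = ren Suc t"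
  by (simp add: lift_ren)

definition senv :: "tm \<Rightarrow> nat \<Rightarrow> nat \<Rightarrow> tm" where
  "senv s k i = (if i < k then Var i else if i = k then s else Var (i - 1))"

lemma subst_psub: "subst t s k = psub (senv s k) t"
proof (induction t arbitrary: s k)
  case (Lam t)
  have "ups (senv s k) = senv (lift s 0) (Suc k)"
    by (simp add: fun_eq_iff ups_def senv_def lift0 split: nat.split)
  then show ?case using Lam by simp
qed (simp_all add: senv_def)

fun cl :: "nat \<Rightarrow> tm \<Rightarrow> bool" where
  "cl n (Var i) = (i < n)"
| "cl n (App s t) = (cl n s \<and> cl n t)"
| "cl n (Lam t) = cl (Suc n) t"

lemma psub_cl: "cl n t \<Longrightarrow> (\<forall>i<n. \<sigma> i = Var i) \<Longrightarrow> psub \<sigma> t = t"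
proof (induction t arbitrary: n \<sigma>)
  case (Lam t)
  have "\<forall>i<Suc n. ups \<sigma> i = Var i" using Lam.prems(2)
    by (auto simp: ups_def split: nat.split)
  then show ?case using Lam by simp
qed auto

lemma ren_cl: "cl n t \<Longrightarrow> (\<forall>i<n. r i = i) \<Longrightarrow> ren r t = t"
proof (induction t arbitrary: n r)
  case (Lam t)
  have "\<forall>i<Suc n. upr r i = i" using Lam.prems(2)
    by (auto simp: upr_def split: nat.split)
  then show ?case using Lam by simp
qed auto

lemma psub_closed[simp]: "cl 0 t \<Longrightarrow> psub \<sigma> t = t"
  using psub_cl by blast
lemma ren_closed[simp]: "cl 0 t \<Longrightarrow> ren r t = t"
  using ren_cl by blast

lemma cl_mono: "cl n t \<Longrightarrow> n \<le> m \<Longrightarrow> cl m t"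
  by (induction t arbitrary: n m) fastforce+

lemma typing_cl: "typing \<Gamma> t T \<Longrightarrow> cl (length \<Gamma>) t"
  by (induction rule: typing.induct) auto

lemma typing_weaken: "typing \<Gamma> t T \<Longrightarrow> typing (\<Gamma> @ \<Delta>) t T"
proof (induction rule: typing.induct)
  case (var i \<Gamma> \<tau>) then show ?case by (auto intro!: typing.var simp: nth_append)
next
  case (app \<Gamma> s \<sigma> \<tau> t) then show ?case by (auto intro: typing.app)
next
  case (lam \<sigma> \<Gamma> t \<tau>) then show ?case by (auto intro: typing.lam)
qed

lemma typing_closed: "typing [] t T \<Longrightarrow> typing \<Gamma> t T"
  using typing_weaken[of "[]"] by simp

lemma cl_iter: "cl (Suc (Suc 0)) ((App (Var (Suc 0)) ^^ n) (Var 0))"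
proof (induction n)
  case (Suc n)
  then show ?case by simp
qed simp

lemma cl_church[simp]: "cl 0 (church n)"
  using cl_iter by (simp add: church_def numeral_2_eq_2)

lemma be_refl[simp]: "beta_eta_eq t t"
  by (simp add: beta_eta_eq_def)

lemma be_step: "bestep s t \<Longrightarrow> beta_eta_eq s t"
  by (simp add: beta_eta_eq_def r_into_rtranclp)

lemma be_trans: "beta_eta_eq s t \<Longrightarrow> beta_eta_eq t u \<Longrightarrow> beta_eta_eq s u"
  unfolding beta_eta_eq_def by (rule rtranclp_trans)

lemma be_sym: "beta_eta_eq s t \<Longrightarrow> beta_eta_eq t s"
  unfolding beta_eta_eq_def
proof (induction rule: rtranclp_induct)
  case base then show ?case by simp
next
  case (step y z)
  have "(sup bestep (conversep bestep)) z y" using step(2) by auto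
  then show ?case using step(3) by (meson converse_rtranclp_into_rtranclp)
qed

lemma be_cong:
  assumes "\<And>x y. bestep x y \<Longrightarrow> bestep (F x) (F y)" "beta_eta_eq x y"
  shows "beta_eta_eq (F x) (F y)"
  using assms(2) unfolding beta_eta_eq_def
proof (induction rule: rtranclp_induct)
  case base then show ?case by simp
next
  case (step y z)
  have "(sup bestep (conversep bestep)) (F y) (F z)" using step(2) assms(1) by auto
  then show ?case using step(3) by (meson rtranclp.rtrancl_into_rtrancl)
qed

lemma be_appL: "beta_eta_eq s s' \<Longrightarrow> beta_eta_eq (App s t) (App s' t)"
  using be_cong[of "\<lambda>x. App x t"] bestep.appL by blast
lemma be_appR: "beta_eta_eq t t' \<Longrightarrow> beta_eta_eq (App s t) (App s t')"
  using be_cong[of "\<lambda>x. App s x"] bestep.appR by blast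
lemma be_app: "beta_eta_eq s s' \<Longrightarrow> beta_eta_eq t t' \<Longrightarrow> beta_eta_eq (App s t) (App s' t')"
  by (meson be_appL be_appR be_trans)
lemma be_lam: "beta_eta_eq s s' \<Longrightarrow> beta_eta_eq (Lam s) (Lam s')"
  using be_cong[of "Lam"] bestep.abs by blast

lemma be_beta: "beta_eta_eq (App (Lam s) t) (psub (senv t 0) s)"
  using be_step[OF bestep.beta] by (simp add: subst_psub)

lemma be_eta: "beta_eta_eq (Lam (App (ren Suc s) (Var 0))) s"
  using be_step[OF bestep.eta] by (simp add: lift0)


definition lams :: "nat \<Rightarrow> tm \<Rightarrow> tm" where "lams k t = (Lam ^^ k) t"
definition vars :: "nat \<Rightarrow> tm list" where "vars n = map (\<lambda>i. Var (n - 1 - i)) [0..<n]"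
definition env :: "tm list \<Rightarrow> nat \<Rightarrow> tm" where
  "env xs i = (if i < length xs then xs ! (length xs - 1 - i) else Var (i - length xs))"

lemma apps_Nil[simp]: "apps s [] = s" by (simp add: apps_def)
lemma apps_Cons[simp]: "apps s (x # xs) = apps (App s x) xs" by (simp add: apps_def)
lemma apps_snoc[simp]: "apps s (xs @ [x]) = App (apps s xs) x" by (simp add: apps_def)

lemma lams_0[simp]: "lams 0 t = t" by (simp add: lams_def)
lemma lams_Suc: "lams (Suc k) t = Lam (lams k t)" by (simp add: lams_def)
lemma lams_Suc_right: "lams (Suc k) t = lams k (Lam t)" by (simp add: lams_def funpow_Suc_right del: funpow.simps)

lemma psub_apps[simp]: "psub \<sigma> (apps s xs) = apps (psub \<sigma> s) (map (psub \<sigma>) xs)"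
  by (induction xs arbitrary: s) auto
lemma ren_apps[simp]: "ren r (apps s xs) = apps (ren r s) (map (ren r) xs)"
  by (induction xs arbitrary: s) auto

lemma psub_lams[simp]: "psub \<sigma> (lams k t) = lams k (psub ((ups ^^ k) \<sigma>) t)"
  by (induction k arbitrary: \<sigma>) (simp_all add: lams_Suc funpow_Suc_right del: funpow.simps)

lemma upr_id: "upr (\<lambda>j. j) = (\<lambda>j. j)"
  by (simp add: fun_eq_iff upr_def split: nat.split)

lemma ren_id[simp]: "ren (\<lambda>j. j) t = t"
  by (induction t) (simp_all add: upr_id)

declare be_trans[trans]

lemma ups_0[simp]: "ups \<sigma> 0 = Var 0" by (simp add: ups_def)
lemma ups_S[simp]: "ups \<sigma> (Suc j) = ren Suc (\<sigma> j)" by (simp add: ups_def)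

lemma upsk: "(ups ^^ k) \<sigma> i = (if i < k then Var i else ren (\<lambda>j. j + k) (\<sigma> (i - k)))"
proof (induction k arbitrary: i)
  case 0 then show ?case by (simp add: psub_Var)
next
  case (Suc k)
  show ?case
  proof (cases i)
    case 0 then show ?thesis by simp
  next
    case (Suc j)
    have "(\<lambda>x. Suc (x + k)) = Suc \<circ> (\<lambda>x. x + k)" by auto
    then show ?thesis using Suc \<open>i = Suc j\<close> by (simp add: Suc.IH ren_ren)
  qed
qed

lemma be_apps_head: "beta_eta_eq s s' \<Longrightarrow> beta_eta_eq (apps s xs) (apps s' xs)"
  by (induction xs arbitrary: s s') (auto intro: be_appL)

lemma be_apps_args: "list_all2 beta_eta_eq xs ys \<Longrightarrow> beta_eta_eq (apps s xs) (apps s ys)"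
proof (induction xs arbitrary: ys s)
  case Nil then show ?case by simp
next
  case (Cons x xs)
  then obtain y ys' where "ys = y # ys'" "beta_eta_eq x y" "list_all2 beta_eta_eq xs ys'"
    by (cases ys) auto
  then show ?case using Cons.IH be_apps_head be_appR be_trans by fastforce
qed

lemma be_lams: "beta_eta_eq s s' \<Longrightarrow> beta_eta_eq (lams k s) (lams k s')"
  by (induction k) (simp_all add: lams_Suc be_lam)

lemma multi_beta: "beta_eta_eq (apps (lams (length xs) t) xs) (psub (env xs) t)"
proof (induction xs arbitrary: t rule: rev_induct)
  case Nil
  have "env [] = Var" by (simp add: fun_eq_iff env_def)
  then show ?case by (simp add: psub_Var)
next
  case (snoc b xs)
  let ?n = "length xs"
  have "apps (lams (length (xs @ [b])) t) (xs @ [b]) = App (apps (lams ?n (Lam t)) xs) b"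
    by (simp add: lams_Suc_right)
  also have "beta_eta_eq \<dots> (App (psub (env xs) (Lam t)) b)"
    by (rule be_appL) (rule snoc.IH)
  also have "App (psub (env xs) (Lam t)) b = App (Lam (psub (ups (env xs)) t)) b" by simp
  also have "beta_eta_eq \<dots> (psub (senv b 0) (psub (ups (env xs)) t))" by (rule be_beta)
  also have "psub (senv b 0) (psub (ups (env xs)) t) = psub (env (xs @ [b])) t"
  proof -
    have se: "senv b 0 \<circ> Suc = Var" by (simp add: fun_eq_iff senv_def)
    have "psub (senv b 0) \<circ> ups (env xs) = env (xs @ [b])"
    proof (rule HOL.ext)
      fix i show "(psub (senv b 0) \<circ> ups (env xs)) i = env (xs @ [b]) i"
      proof (cases i)
        case 0 then show ?thesis by (simp add: ups_def senv_def env_def)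
      next
        case (Suc j)
        then show ?thesis
          by (auto simp: ups_def psub_ren se psub_Var env_def nth_append)
      qed
    qed
    then show ?thesis by (simp add: psub_psub)
  qed
  finally show ?case .
qed

lemma be_trans': "beta_eta_eq s t \<Longrightarrow> t = u \<Longrightarrow> beta_eta_eq s u" by simp

lemma psub_iter: "psub \<sigma> ((App f ^^ n) x) = (App (psub \<sigma> f) ^^ n) (psub \<sigma> x)"
  by (induction n) auto

lemma church_app: "beta_eta_eq (App (App (church n) f) x) ((App f ^^ n) x)"
proof -
  have se: "senv x 0 \<circ> Suc = Var" by (simp add: fun_eq_iff senv_def)
  have "beta_eta_eq (App (church n) f) (psub (senv f 0) (Lam ((App (Var 1) ^^ n) (Var 0))))"
    unfolding church_def by (rule be_beta)
  also have "psub (senv f 0) (Lam ((App (Var 1) ^^ n) (Var 0))) = Lam ((App (ren Suc f) ^^ n) (Var 0))"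
    by (simp add: psub_iter ups_def senv_def)
  finally have "beta_eta_eq (App (App (church n) f) x) (App (Lam ((App (ren Suc f) ^^ n) (Var 0))) x)"
    by (rule be_appL)
  also have "beta_eta_eq \<dots> (psub (senv x 0) ((App (ren Suc f) ^^ n) (Var 0)))" by (rule be_beta)
  also have "psub (senv x 0) ((App (ren Suc f) ^^ n) (Var 0)) = (App f ^^ n) x"
    by (simp add: psub_iter psub_ren se psub_Var) (simp add: senv_def)
  finally show ?thesis .
qed

lemma church_intro: "beta_eta_eq X ((App (Var 1) ^^ N) (Var 0)) \<Longrightarrow> beta_eta_eq (Lam (Lam X)) (church N)"
  unfolding church_def by (intro be_lam)

lemma vars_Suc: "vars (Suc n) = map (ren Suc) (vars n) @ [Var 0]"
  by (simp add: vars_def) (simp add: Suc_diff_Suc)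

lemma length_vars[simp]: "length (vars n) = n" by (simp add: vars_def)

lemma eta_n: "beta_eta_eq (lams n (apps (ren (\<lambda>i. i + n) u) (vars n))) u"
proof (induction n)
  case 0
  then show ?case by (simp add: vars_def)
next
  case (Suc n)
  have r: "ren (\<lambda>i. Suc (i + n)) u = ren Suc (ren (\<lambda>i. i + n) u)"
    by (simp add: ren_ren comp_def)
  have "lams (Suc n) (apps (ren (\<lambda>i. i + Suc n) u) (vars (Suc n)))
      = lams n (Lam (App (ren Suc (apps (ren (\<lambda>i. i + n) u) (vars n))) (Var 0)))"
    by (simp add: lams_Suc_right vars_Suc r)
  also have "beta_eta_eq \<dots> (lams n (apps (ren (\<lambda>i. i + n) u) (vars n)))"
    by (rule be_lams) (rule be_eta)
  finally show ?case using Suc.IH by (rule be_trans)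
qed


lemma typing_lams: "typing (replicate k A @ \<Gamma>) t B \<Longrightarrow> typing \<Gamma> (lams k t) ((Arr A ^^ k) B)"
proof (induction k arbitrary: \<Gamma>)
  case 0 then show ?case by simp
next
  case (Suc k)
  have "typing (replicate k A @ A # \<Gamma>) t B" using Suc.prems by (simp add: replicate_app_Cons_same)
  then have "typing (A # \<Gamma>) (lams k t) ((Arr A ^^ k) B)" by (rule Suc.IH)
  then show ?case by (simp add: lams_Suc typing.lam)
qed

lemma typing_apps: "typing \<Gamma> s ((Arr A ^^ length xs) B) \<Longrightarrow> (\<forall>x\<in>set xs. typing \<Gamma> x A) \<Longrightarrow> typing \<Gamma> (apps s xs) B"
proof (induction xs arbitrary: s)
  case Nil then show ?case by simp
next
  case (Cons x xs)
  have "typing \<Gamma> (App s x) ((Arr A ^^ length xs) B)"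
    using Cons.prems by (auto intro: typing.app)
  then show ?case using Cons by simp
qed

lemma typing_var: "i < length \<Gamma> \<Longrightarrow> \<Gamma> ! i = T \<Longrightarrow> typing \<Gamma> (Var i) T"
  by (rule typing.var)

lemma typing_vars: "\<forall>x\<in>set (vars n). typing (replicate n A @ \<Gamma>) x A"
  by (auto simp: vars_def nth_append intro!: typing.var)

lemma typing_iter: "typing (\<tau> # Arr \<tau> \<tau> # \<Gamma>) ((App (Var 1) ^^ n) (Var 0)) \<tau>"
proof (induction n)
  case 0 then show ?case by (auto intro: typing.var)
next
  case (Suc n) then show ?case by (simp, intro typing.app[where \<sigma>=\<tau>]) (auto intro: typing.var)
qed

lemma typing_church: "typing \<Gamma> (church n) (omega \<tau>)"
  unfolding church_def omega_def by (intro typing.lam typing_iter)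

definition defin :: "ty \<Rightarrow> nat \<Rightarrow> (nat list \<Rightarrow> nat) \<Rightarrow> bool" where
  "defin \<tau> k f \<longleftrightarrow> (\<exists>E. typing [] E (num_fun_ty k \<tau>) \<and>
     (\<forall>ns. length ns = k \<longrightarrow> beta_eta_eq (apps E (map church ns)) (church (f ns))))"

lemma definI:
  assumes "typing (replicate k (omega \<tau>)) t (omega \<tau>)"
    and "\<And>ns. length ns = k \<Longrightarrow> beta_eta_eq (psub (env (map church ns)) t) (church (f ns))"
  shows "defin \<tau> k f"
  unfolding defin_def
proof (intro exI conjI allI impI)
  show "typing [] (lams k t) (num_fun_ty k \<tau>)"
    unfolding num_fun_ty_def using typing_lams[of k "omega \<tau>" "[]"] assms(1) by simp
  fix ns :: "nat list" assume l: "length ns = k"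
  have "beta_eta_eq (apps (lams (length (map church ns)) t) (map church ns)) (psub (env (map church ns)) t)"
    by (rule multi_beta)
  then show "beta_eta_eq (apps (lams k t) (map church ns)) (church (f ns))"
    using l assms(2)[OF l] be_trans by auto
qed

lemma const_defin: "defin \<tau> k (\<lambda>_. c)"
  by (rule definI[where t="church c"]) (simp_all add: typing_church)


lemma proj_defin: "i < k \<Longrightarrow> defin \<tau> k (\<lambda>ns. ns ! i)"
  by (rule definI[where t="Var (k - 1 - i)"]) (auto intro!: typing.var simp: env_def)

lemma add_defin: "defin \<tau> 2 (\<lambda>ns. ns ! 0 + ns ! 1)"
proof (rule definI[where t="Lam (Lam (App (App (Var 3) (Var 1)) (App (App (Var 2) (Var 1)) (Var 0))))"])
  show "typing (replicate 2 (omega \<tau>)) (Lam (Lam (App (App (Var 3) (Var 1)) (App (App (Var 2) (Var 1)) (Var 0))))) (omega \<tau>)"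
    unfolding omega_def
    by (intro typing.lam typing.app[where \<sigma>=\<tau>] typing.app[where \<sigma>="Arr \<tau> \<tau>"] typing.var) (simp_all add: numeral_eq_Suc omega_def)
next
  fix ns :: "nat list" assume "length ns = 2"
  then obtain a b where ns: "ns = [a, b]"
    by (metis (no_types, lifting) One_nat_def Suc_1 length_0_conv length_Suc_conv)
  have "beta_eta_eq (App (App (church a) (Var 1)) (App (App (church b) (Var 1)) (Var 0)))
      ((App (Var 1) ^^ (a + b)) (Var 0))"
  proof -
    have "beta_eta_eq (App (App (church a) (Var 1)) (App (App (church b) (Var 1)) (Var 0)))
      (App (App (church a) (Var 1)) ((App (Var 1) ^^ b) (Var 0)))"
      by (intro be_appR church_app)
    also have "beta_eta_eq \<dots> ((App (Var 1) ^^ a) ((App (Var 1) ^^ b) (Var 0)))"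
      by (rule church_app)
    finally show ?thesis by (simp add: funpow_add)
  qed
  then show "beta_eta_eq (psub (env (map church ns)) (Lam (Lam (App (App (Var 3) (Var 1)) (App (App (Var 2) (Var 1)) (Var 0)))))) (church (ns ! 0 + ns ! 1))"
    by (simp add: ns env_def numeral_eq_Suc church_intro)
qed


lemma iter_mult: "beta_eta_eq ((App (App (church b) f) ^^ a) x) ((App f ^^ (a * b)) x)"
proof (induction a)
  case 0 then show ?case by simp
next
  case (Suc a)
  have "beta_eta_eq ((App (App (church b) f) ^^ Suc a) x) (App (App (church b) f) ((App f ^^ (a * b)) x))"
    using Suc by (simp add: be_appR)
  also have "beta_eta_eq \<dots> ((App f ^^ b) ((App f ^^ (a * b)) x))" by (rule church_app)
  finally show ?case by (simp add: funpow_add)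
qed

lemma len2: "length ns = 2 \<Longrightarrow> \<exists>a b. ns = [a, b]"
  by (metis (no_types, lifting) One_nat_def Suc_1 length_0_conv length_Suc_conv)
lemma len3: "length ns = 3 \<Longrightarrow> \<exists>a b c. ns = [a, b, c]"
  by (cases ns; cases "tl ns"; cases "tl (tl ns)") (auto simp: numeral_eq_Suc)

lemma mult_defin: "defin \<tau> 2 (\<lambda>ns. ns ! 0 * ns ! 1)"
proof (rule definI[where t="Lam (Lam (App (App (Var 3) (App (Var 2) (Var 1))) (Var 0)))"])
  show "typing (replicate 2 (omega \<tau>)) (Lam (Lam (App (App (Var 3) (App (Var 2) (Var 1))) (Var 0)))) (omega \<tau>)"
    unfolding omega_def
    by (intro typing.lam typing.app[where \<sigma>=\<tau>] typing.app[where \<sigma>="Arr \<tau> \<tau>"] typing.var) (simp_all add: numeral_eq_Suc omega_def)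
next
  fix ns :: "nat list" assume "length ns = 2"
  then obtain a b where ns: "ns = [a, b]" using len2 by blast
  have "beta_eta_eq (App (App (church a) (App (church b) (Var 1))) (Var 0))
      ((App (Var 1) ^^ (a * b)) (Var 0))"
    using church_app[of a "App (church b) (Var 1)" "Var 0"] iter_mult[where b=b and f="Var 1" and a=a and x="Var 0"]
    by (rule be_trans)
  then show "beta_eta_eq (psub (env (map church ns)) (Lam (Lam (App (App (Var 3) (App (Var 2) (Var 1))) (Var 0))))) (church (ns ! 0 * ns ! 1))"
    by (simp add: ns env_def numeral_eq_Suc church_intro)
qed

lemma ifzero_defin: "defin \<tau> 3 (\<lambda>ns. if ns ! 0 = 0 then ns ! 1 else ns ! 2)"
proof (rule definI[where t="Lam (Lam (App (App (Var 4) (Lam (App (App (Var 3) (Var 2)) (Var 1)))) (App (App (Var 3) (Var 1)) (Var 0))))"])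
  show "typing (replicate 3 (omega \<tau>)) (Lam (Lam (App (App (Var 4) (Lam (App (App (Var 3) (Var 2)) (Var 1)))) (App (App (Var 3) (Var 1)) (Var 0))))) (omega \<tau>)"
    unfolding omega_def
    by (intro typing.lam typing.app[where \<sigma>=\<tau>] typing.app[where \<sigma>="Arr \<tau> \<tau>"] typing.var) (simp_all add: numeral_eq_Suc omega_def)
next
  fix ns :: "nat list" assume "length ns = 3"
  then obtain a b c where ns: "ns = [a, b, c]" using len3 by blast
  let ?K = "Lam (App (App (church c) (Var 2)) (Var 1))"
  let ?X = "App (App (church b) (Var 1)) (Var 0)"
  have "beta_eta_eq (App (App (church a) ?K) ?X) ((App (Var 1) ^^ (if a = 0 then b else c)) (Var 0))"
  proof -
    have "beta_eta_eq (App (App (church a) ?K) ?X) ((App ?K ^^ a) ?X)" by (rule church_app)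
    also have "beta_eta_eq \<dots> ((App (Var 1) ^^ (if a = 0 then b else c)) (Var 0))"
    proof (cases a)
      case 0 then show ?thesis by (simp add: church_app)
    next
      case (Suc a')
      have "(App ?K ^^ a) ?X = App ?K ((App ?K ^^ a') ?X)" using Suc by simp
      also have "beta_eta_eq \<dots> (psub (senv ((App ?K ^^ a') ?X) 0) (App (App (church c) (Var 2)) (Var 1)))"
        by (rule be_beta)
      also have "psub (senv ((App ?K ^^ a') ?X) 0) (App (App (church c) (Var 2)) (Var 1)) = App (App (church c) (Var 1)) (Var 0)"
        by (simp add: senv_def)
      also have "beta_eta_eq \<dots> ((App (Var 1) ^^ c) (Var 0))" by (rule church_app)
      finally show ?thesis using Suc by simp
    qed
    finally show ?thesis .
  qed
  then have "beta_eta_eq (Lam (Lam (App (App (church a) ?K) ?X))) (church (if a = 0 then b else c))"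
    by (rule church_intro)
  moreover have "psub (env (map church ns)) (Lam (Lam (App (App (Var 4) (Lam (App (App (Var 3) (Var 2)) (Var 1)))) (App (App (Var 3) (Var 1)) (Var 0))))) = Lam (Lam (App (App (church a) ?K) ?X))"
    by (simp add: ns env_def numeral_eq_Suc)
  moreover have "(if ns ! 0 = 0 then ns ! 1 else ns ! 2) = (if a = 0 then b else c)" by (simp add: ns)
  ultimately show "beta_eta_eq (psub (env (map church ns)) (Lam (Lam (App (App (Var 4) (Lam (App (App (Var 3) (Var 2)) (Var 1)))) (App (App (Var 3) (Var 1)) (Var 0)))))) (church (if ns ! 0 = 0 then ns ! 1 else ns ! 2))"
    by simp
qed

lemma psub_env_vars: "map (psub (env xs)) (vars (length xs)) = xs"
  by (rule nth_equalityI) (auto simp: vars_def env_def)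

lemma comp_defin:
  assumes g: "defin \<tau> (length hs) g" and hs: "\<forall>h\<in>set hs. defin \<tau> k h"
  shows "defin \<tau> k (\<lambda>ns. g (map (\<lambda>h. h ns) hs))"
proof -
  obtain G where G: "typing [] G (num_fun_ty (length hs) \<tau>)"
    "\<And>ns. length ns = length hs \<Longrightarrow> beta_eta_eq (apps G (map church ns)) (church (g ns))"
    using g unfolding defin_def by blast
  from hs have "\<forall>h\<in>set hs. \<exists>E. typing [] E (num_fun_ty k \<tau>) \<and>
     (\<forall>ns. length ns = k \<longrightarrow> beta_eta_eq (apps E (map church ns)) (church (h ns)))"
    unfolding defin_def by blast
  then obtain HE where HE: "\<And>h. h \<in> set hs \<Longrightarrow> typing [] (HE h) (num_fun_ty k \<tau>) \<and>
     (\<forall>ns. length ns = k \<longrightarrow> beta_eta_eq (apps (HE h) (map church ns)) (church (h ns)))"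
    by metis
  show ?thesis
  proof (rule definI[where t="apps G (map (\<lambda>h. apps (HE h) (vars k)) hs)"])
    show "typing (replicate k (omega \<tau>)) (apps G (map (\<lambda>h. apps (HE h) (vars k)) hs)) (omega \<tau>)"
    proof (rule typing_apps[where A="omega \<tau>"])
      show "typing (replicate k (omega \<tau>)) G ((Arr (omega \<tau>) ^^ length (map (\<lambda>h. apps (HE h) (vars k)) hs)) (omega \<tau>))"
        using typing_closed[OF G(1)] by (simp add: num_fun_ty_def)
      show "\<forall>x\<in>set (map (\<lambda>h. apps (HE h) (vars k)) hs). typing (replicate k (omega \<tau>)) x (omega \<tau>)"
      proof
        fix x assume "x \<in> set (map (\<lambda>h. apps (HE h) (vars k)) hs)"
        then obtain h where h: "h \<in> set hs" "x = apps (HE h) (vars k)" by auto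
        show "typing (replicate k (omega \<tau>)) x (omega \<tau>)"
          unfolding h(2)
          apply (rule typing_apps[where A="omega \<tau>"])
          using typing_closed[OF conjunct1[OF HE[OF h(1)]]] apply (simp add: num_fun_ty_def)
          using typing_vars[of k "omega \<tau>" "[]"] by simp
      qed
    qed
  next
    fix ns :: "nat list" assume l: "length ns = k"
    have clG: "cl 0 G" using typing_cl[OF G(1)] by simp
    have clH: "\<And>h. h \<in> set hs \<Longrightarrow> cl 0 (HE h)" using HE typing_cl by fastforce
    have vk: "map (psub (env (map church ns))) (vars k) = map church ns"
      using psub_env_vars[of "map church ns"] l by simp
    have "psub (env (map church ns)) (apps G (map (\<lambda>h. apps (HE h) (vars k)) hs))
        = apps G (map (\<lambda>h. apps (HE h) (map church ns)) hs)"
      using clG clH vk by (simp cong: map_cong)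
    also have "beta_eta_eq \<dots> (apps G (map church (map (\<lambda>h. h ns) hs)))"
      by (rule be_apps_args) (auto simp: list_all2_conv_all_nth l HE)
    also have "beta_eta_eq \<dots> (church (g (map (\<lambda>h. h ns) hs)))"
      by (rule G(2)) simp
    finally show "beta_eta_eq (psub (env (map church ns)) (apps G (map (\<lambda>h. apps (HE h) (vars k)) hs))) (church (g (map (\<lambda>h. h ns) hs)))" .
  qed
qed

lemma ext_poly_defin: "(k, f) \<in> ext_poly \<Longrightarrow> defin \<tau> k f"
proof (induction rule: ext_poly.induct)
  case (zero k) then show ?case by (rule const_defin)
next
  case (one k) then show ?case by (rule const_defin)
next
  case (proj i k) then show ?case by (rule proj_defin)
next
  case add then show ?case by (rule add_defin)
next
  case mult then show ?case by (rule mult_defin)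
next
  case ifzero then show ?case by (rule ifzero_defin)
next
  case (comp hs g k) then show ?case using comp_defin by blast
next
  case (ext k f g) then show ?case unfolding defin_def by auto
qed


definition tyn :: "nat \<Rightarrow> ty" where "tyn n = (Arr ty.O ^^ n) ty.O"
definition Pj :: "nat \<Rightarrow> nat \<Rightarrow> tm" where "Pj n j = lams n (Var (n - 1 - j))"
definition Gs :: "nat \<Rightarrow> (nat \<Rightarrow> nat) \<Rightarrow> tm" where
  "Gs n s = Lam (lams n (apps (Var n) (map (\<lambda>i. Var (n - 1 - s i)) [0..<n])))"

lemma cl_lams: "cl (k + m) t \<Longrightarrow> cl m (lams k t)"
  by (induction k arbitrary: m) (simp_all add: lams_Suc)

lemma cl_Pj: "j < n \<Longrightarrow> cl 0 (Pj n j)"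
  unfolding Pj_def by (rule cl_lams) simp

lemma cl_apps: "cl m h \<Longrightarrow> \<forall>x\<in>set xs. cl m x \<Longrightarrow> cl m (apps h xs)"
  by (induction xs arbitrary: h) auto

lemma cl_Gs: "cl 0 (Gs n s)"
proof -
  have "cl (n + 1) (apps (Var n) (map (\<lambda>i. Var (n - 1 - s i)) [0..<n]))"
    by (intro cl_apps) auto
  then show ?thesis unfolding Gs_def by (simp add: cl_lams)
qed

lemma G_step:
  assumes j: "j < n" and s: "\<forall>i<n. s i < n"
  shows "beta_eta_eq (App (Gs n s) (Pj n j)) (Pj n (s j))"
proof -
  let ?As = "map (\<lambda>i. Var (n - 1 - s i)) [0..<n]"
  have m: "map (psub ((ups ^^ n) (senv (Pj n j) 0))) ?As = ?As"
    using j by (auto simp: upsk)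
  have "beta_eta_eq (App (Gs n s) (Pj n j)) (psub (senv (Pj n j) 0) (lams n (apps (Var n) ?As)))"
    unfolding Gs_def by (rule be_beta)
  also have "psub (senv (Pj n j) 0) (lams n (apps (Var n) ?As)) = lams n (apps (Pj n j) ?As)"
    using cl_Pj[OF j] s m by (simp add: upsk senv_def del: map_map)
  also have "beta_eta_eq \<dots> (lams n (psub (env ?As) (Var (n - 1 - j))))"
    using multi_beta[of ?As "Var (n - 1 - j)"] by (intro be_lams) (simp add: Pj_def)
  also have "lams n (psub (env ?As) (Var (n - 1 - j))) = Pj n (s j)"
    using j by (simp add: env_def Pj_def)
  finally show ?thesis .
qed

lemma G_iter:
  assumes j: "j < n" and s: "\<forall>i<n. s i < n"
  shows "(s ^^ m) j < n \<and> beta_eta_eq ((App (Gs n s) ^^ m) (Pj n j)) (Pj n ((s ^^ m) j))"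
proof (induction m)
  case 0 then show ?case using j by simp
next
  case (Suc m)
  then have "beta_eta_eq ((App (Gs n s) ^^ Suc m) (Pj n j)) (App (Gs n s) (Pj n ((s ^^ m) j)))"
    by (simp add: be_appR)
  also have "beta_eta_eq \<dots> (Pj n ((s ^^ Suc m) j))"
    using G_step[OF _ s] Suc by simp
  finally show ?case using Suc s by simp
qed


lemma typing_Gs: "\<forall>i<n. s i < n \<Longrightarrow> typing [] (Gs n s) (Arr (tyn n) (tyn n))"
  unfolding Gs_def
proof (intro typing.lam)
  assume s: "\<forall>i<n. s i < n"
  show "typing [tyn n] (lams n (apps (Var n) (map (\<lambda>i. Var (n - 1 - s i)) [0..<n]))) (tyn n)"
    unfolding tyn_def
  proof (rule typing_lams)
    show "typing (replicate n ty.O @ [(Arr ty.O ^^ n) ty.O]) (apps (Var n) (map (\<lambda>i. Var (n - 1 - s i)) [0..<n])) ty.O"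
      by (rule typing_apps[where A="ty.O"]) (auto intro!: typing.var simp: nth_append)
  qed
qed

lemma typing_Pj: "j < n \<Longrightarrow> typing [] (Pj n j) (tyn n)"
  unfolding Pj_def tyn_def
  by (rule typing_lams) (auto intro!: typing.var simp: nth_append)

lemma sel_defin:
  assumes a: "0 < a" and n: "0 < n" and s: "\<forall>i<n. s i < n" and ch: "\<forall>j<n. ch j < a"
  shows "defin (tyn n) a (\<lambda>ns. ns ! ch ((s ^^ (ns ! 0)) 0))"
proof -
  define Bs where "Bs = map (\<lambda>j. apps (App (App (Var (n+1+a - ch j)) (Var (n+1))) (Var n)) (vars n)) [0..<n]"
  define BODY where "BODY = apps (App (App (Var (n+1+a)) (Gs n s)) (Pj n 0)) Bs"
  let ?\<tau> = "tyn n"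
  let ?\<Gamma> = "replicate n ty.O @ ?\<tau> # Arr ?\<tau> ?\<tau> # replicate a (omega ?\<tau>)"
  have g1: "\<And>i. n + 2 \<le> i \<Longrightarrow> i < n + 2 + a \<Longrightarrow> ?\<Gamma> ! i = omega ?\<tau>"
    by (auto simp: nth_append nth_Cons')
  have g2: "?\<Gamma> ! (n+1) = Arr ?\<tau> ?\<tau>" "?\<Gamma> ! n = ?\<tau>"
    by (auto simp: nth_append nth_Cons')
  have lenG: "length ?\<Gamma> = n + 2 + a" by simp
  show ?thesis
  proof (rule definI[where t="lams (Suc (Suc n)) BODY"])
    have "typing ?\<Gamma> BODY ty.O"
      unfolding BODY_def
    proof (rule typing_apps[where A="ty.O"])
      have "typing ?\<Gamma> (App (App (Var (n+1+a)) (Gs n s)) (Pj n 0)) ?\<tau>"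
      proof (rule typing.app[where \<sigma>="?\<tau>"])
        show "typing ?\<Gamma> (App (Var (n+1+a)) (Gs n s)) (Arr ?\<tau> ?\<tau>)"
        proof (rule typing.app[where \<sigma>="Arr ?\<tau> ?\<tau>"])
          show "typing ?\<Gamma> (Var (n+1+a)) (Arr (Arr ?\<tau> ?\<tau>) (Arr ?\<tau> ?\<tau>))"
            using g1[of "n+1+a"] a by (intro typing.var) (auto simp: omega_def)
          show "typing ?\<Gamma> (Gs n s) (Arr ?\<tau> ?\<tau>)" using typing_Gs[OF s] by (rule typing_closed)
        qed
        show "typing ?\<Gamma> (Pj n 0) ?\<tau>" using typing_Pj[OF n] by (rule typing_closed)
      qed
      then show "typing ?\<Gamma> (App (App (Var (n+1+a)) (Gs n s)) (Pj n 0)) ((Arr ty.O ^^ length Bs) ty.O)"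
        by (simp add: Bs_def tyn_def)
      show "\<forall>x\<in>set Bs. typing ?\<Gamma> x ty.O"
      proof
        fix x assume "x \<in> set Bs"
        then obtain j where j: "j < n" "x = apps (App (App (Var (n+1+a - ch j)) (Var (n+1))) (Var n)) (vars n)"
          by (auto simp: Bs_def)
        have hd: "typing ?\<Gamma> (App (App (Var (n+1+a - ch j)) (Var (n+1))) (Var n)) ?\<tau>"
        proof (rule typing.app[where \<sigma>="?\<tau>"])
          show "typing ?\<Gamma> (App (Var (n+1+a - ch j)) (Var (n+1))) (Arr ?\<tau> ?\<tau>)"
          proof (rule typing.app[where \<sigma>="Arr ?\<tau> ?\<tau>"])
            show "typing ?\<Gamma> (Var (n+1+a - ch j)) (Arr (Arr ?\<tau> ?\<tau>) (Arr ?\<tau> ?\<tau>))"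
              using g1[of "n+1+a - ch j"] ch j(1) by (intro typing.var) (auto simp: omega_def)
            show "typing ?\<Gamma> (Var (n+1)) (Arr ?\<tau> ?\<tau>)" using g2 by (intro typing.var) auto
          qed
          show "typing ?\<Gamma> (Var n) ?\<tau>" using g2 by (intro typing.var) auto
        qed
        show "typing ?\<Gamma> x ty.O"
          unfolding j(2)
          by (rule typing_apps[where A="ty.O"]) (use hd typing_vars[of n "ty.O"] in \<open>simp_all add: tyn_def\<close>)
      qed
    qed
    then have "typing (?\<tau> # Arr ?\<tau> ?\<tau> # replicate a (omega ?\<tau>)) (lams n BODY) ?\<tau>"
      using typing_lams[of n "ty.O" "?\<tau> # Arr ?\<tau> ?\<tau> # replicate a (omega ?\<tau>)" BODY "ty.O"]
      by (simp add: tyn_def)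
    then show "typing (replicate a (omega ?\<tau>)) (lams (Suc (Suc n)) BODY) (omega ?\<tau>)"
      by (simp add: lams_Suc omega_def typing.lam)
  next
    fix ns :: "nat list" assume l: "length ns = a"
    let ?xs = "map church ns"
    let ?\<sigma> = "(ups ^^ Suc (Suc n)) (env ?xs)"
    let ?m = "ns ! 0"
    let ?r = "(s ^^ ?m) 0"
    let ?c = "ns ! ch ?r"
    define Bs' where "Bs' = map (\<lambda>j. apps (App (App (church (ns ! ch j)) (Var (n+1))) (Var n)) (vars n)) [0..<n]"
    have s0: "\<And>i. i < Suc (Suc n) \<Longrightarrow> ?\<sigma> i = Var i" by (simp add: upsk del: funpow.simps)
    have s1: "?\<sigma> (n+1+a) = church ?m"
      using a l by (simp add: upsk env_def del: funpow.simps)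
    have s2: "\<And>j. j < n \<Longrightarrow> ?\<sigma> (n+1+a - ch j) = church (ns ! ch j)"
    proof -
      fix j assume j: "j < n"
      have "n + 1 + a - ch j - Suc (Suc n) = a - 1 - ch j" using ch j by auto
      moreover have "a - Suc (a - 1 - ch j) = ch j" using ch j by auto
      moreover have "\<not> (n+1+a - ch j < Suc (Suc n))" using ch j by auto
      ultimately show "?\<sigma> (n+1+a - ch j) = church (ns ! ch j)"
        using ch j l by (simp add: upsk env_def del: funpow.simps)
    qed
    have s2': "\<And>j. j < n \<Longrightarrow> ?\<sigma> (Suc (n + a) - ch j) = church (ns ! ch j)"
      using s2 by (simp del: funpow.simps)
    have sv: "map (psub ?\<sigma>) (vars n) = vars n"
      by (rule map_idI) (auto simp: vars_def s0 simp del: funpow.simps)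
    have bs: "map (psub ?\<sigma>) Bs = Bs'"
      unfolding Bs_def Bs'_def map_map
      by (rule map_cong) (auto simp: s2' s0 sv simp del: funpow.simps)
    have "psub ?\<sigma> BODY = apps (App (App (church ?m) (Gs n s)) (Pj n 0)) Bs'"
      unfolding BODY_def using s1 bs cl_Gs cl_Pj[OF n] by (simp del: funpow.simps)
    then have e1: "psub (env ?xs) (lams (Suc (Suc n)) BODY) = Lam (Lam (lams n (apps (App (App (church ?m) (Gs n s)) (Pj n 0)) Bs')))"
      by (simp add: lams_Suc[symmetric] del: funpow.simps)
    have rn: "?r < n" using G_iter[OF n s] by blast
    have "beta_eta_eq (apps (App (App (church ?m) (Gs n s)) (Pj n 0)) Bs') (apps ((App (Gs n s) ^^ ?m) (Pj n 0)) Bs')"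
      by (rule be_apps_head) (rule church_app)
    also have "beta_eta_eq \<dots> (apps (Pj n ?r) Bs')"
      by (rule be_apps_head) (use G_iter[OF n s] in blast)
    also have "beta_eta_eq \<dots> (psub (env Bs') (Var (n - 1 - ?r)))"
      using multi_beta[of Bs' "Var (n - 1 - ?r)"] by (simp add: Pj_def Bs'_def)
    also have "psub (env Bs') (Var (n - 1 - ?r)) = apps (ren (\<lambda>i. i + n) (App (App (church ?c) (Var 1)) (Var 0))) (vars n)"
      using rn by (simp add: env_def Bs'_def)
    finally have "beta_eta_eq (lams n (apps (App (App (church ?m) (Gs n s)) (Pj n 0)) Bs')) (lams n (apps (ren (\<lambda>i. i + n) (App (App (church ?c) (Var 1)) (Var 0))) (vars n)))"
      by (rule be_lams)
    also have "beta_eta_eq \<dots> (App (App (church ?c) (Var 1)) (Var 0))" by (rule eta_n)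
    also have "beta_eta_eq \<dots> ((App (Var 1) ^^ ?c) (Var 0))" by (rule church_app)
    finally have "beta_eta_eq (Lam (Lam (lams n (apps (App (App (church ?m) (Gs n s)) (Pj n 0)) Bs')))) (church ?c)"
      by (rule church_intro)
    then show "beta_eta_eq (psub (env ?xs) (lams (Suc (Suc n)) BODY)) (church (ns ! ch ((s ^^ (ns ! 0)) 0)))"
      by (simp only: e1)
  qed
qed


lemma defin_ext: "defin \<tau> k f \<Longrightarrow> (\<And>ns. length ns = k \<Longrightarrow> g ns = f ns) \<Longrightarrow> defin \<tau> k g"
  unfolding defin_def by auto

lemma f2_defin:
  assumes l: "1 \<le> l" and n: "l + 2 \<le> n"
  shows "defin (tyn n) 3 (\<lambda>ns. if ns ! 0 \<le> l then ns ! 1 else ns ! 2)"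
proof -
  let ?s = "\<lambda>i. Suc (min i l)"
  let ?ch = "\<lambda>j. if j \<le> l then 1 else 2 :: nat"
  have it: "\<And>m. (?s ^^ m) 0 = min m (Suc l)"
  proof -
    fix m show "(?s ^^ m) 0 = min m (Suc l)" by (induction m) auto
  qed
  have "defin (tyn n) 3 (\<lambda>ns. ns ! ?ch ((?s ^^ (ns ! 0)) 0))"
    by (rule sel_defin) (use n in auto)
  then show ?thesis
    by (rule defin_ext) (simp add: it)
qed

lemma f1_defin:
  assumes l: "2 \<le> l" and n: "l \<le> n"
  shows "defin (tyn n) (Suc l) (\<lambda>ns. ns ! (ns ! 0 mod l + 1))"
proof -
  let ?s = "\<lambda>i. if i < l then Suc i mod l else 0"
  let ?ch = "\<lambda>j. if j < l then Suc j else 1"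
  have it: "\<And>m. (?s ^^ m) 0 = m mod l"
  proof -
    fix m show "(?s ^^ m) 0 = m mod l"
    proof (induction m)
      case 0 then show ?case by simp
    next
      case (Suc m)
      have "m mod l < l" using l by simp
      then show ?case using Suc by (simp add: mod_Suc_eq)
    qed
  qed
  have "defin (tyn n) (Suc l) (\<lambda>ns. ns ! ?ch ((?s ^^ (ns ! 0)) 0))"
  proof -
    have ml: "\<And>x. x mod l < n" proof -
      fix x have "x mod l < l" using l by simp
      then show "x mod l < n" using n by simp
    qed
    show ?thesis by (rule sel_defin) (use n l ml in auto)
  qed
  then show ?thesis
    by (rule defin_ext) (use l in \<open>simp add: it\<close>)
qed

lemma classG_defin: "(k, f) \<in> classG \<Longrightarrow> \<exists>N. \<forall>n\<ge>N. defin (tyn n) k f"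
proof (induction rule: classG.induct)
  case (poly k f) then show ?case using ext_poly_defin by blast
next
  case (f1 l) then show ?case using f1_defin by blast
next
  case (f2 l) then show ?case using f2_defin by blast
next
  case (comp hs g k)
  obtain Ng where Ng: "\<forall>n\<ge>Ng. defin (tyn n) (length hs) g" using comp.IH by blast
  have "\<forall>h\<in>set hs. \<exists>N. \<forall>n\<ge>N. defin (tyn n) k h" using comp.IH by blast
  then obtain Nh where Nh: "\<And>h. h \<in> set hs \<Longrightarrow> \<forall>n\<ge>Nh h. defin (tyn n) k h" by metis
  show ?case
  proof (intro exI allI impI)
    fix n assume n: "Ng + sum_list (map Nh hs) \<le> n"
    have "\<forall>h\<in>set hs. defin (tyn n) k h"
    proof
      fix h assume h: "h \<in> set hs"
      have "Nh h \<le> sum_list (map Nh hs)" using h by (simp add: member_le_sum_list)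
      then show "defin (tyn n) k h" using Nh[OF h] n by auto
    qed
    then show "defin (tyn n) k (\<lambda>ns. g (map (\<lambda>h. h ns) hs))"
      using comp_defin Ng n by auto
  qed
next
  case (ext k f g) then show ?case using defin_ext by metis
qed

theorem corollary1:
  shows "\<forall>(k, f) \<in> classG. strictly_definable k f"
proof (intro ballI, clarify)
  fix k f assume "(k, f) \<in> classG"
  then obtain N where "\<forall>n\<ge>N. defin (tyn n) k f" using classG_defin by blast
  then have "defin (tyn N) k f" by simp
  then show "strictly_definable k f" unfolding defin_def strictly_definable_def by blast
qed

end
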